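(* Let $a<b$ and let $f:[a,b]\rightarrow\mathbb{R}$ be a differentiable mapping in $(a,b)$ such that $f'\in L^1[a,b]$ and $\gamma\le f'(x)\le \Gamma$ for all $x\in [a,b]$, where $\gamma,\Gamma$ are real constants. Put $S=\frac{f(b)-f(a)}{b-a}$. Then \[ \left|\frac{f\left(\frac{3a+b}{4}\right)+f\left(\frac{a+3b}{4}\right)}{2} -\frac{1}{b-a}\int_{a}^{b}f(t)\,dt\right|\leq \frac{b-a}{4}(S-\gamma) \] and \[ \left|\frac{f\left(\frac{3a+b}{4}\right)+f\left(\frac{a+3b}{4}\right)}{2} -\frac{1}{b-a}\int_{a}^{b}f(t)\,dt\right|\leq \frac{b-a}{4}(\Gamma-S). \] *)

theory Defs
  imports "HOL-Analysis.Analysis"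
begin

end

theory Submission
  imports Defs
begin

lemma half_bound:
  fixes g :: "real \<Rightarrow> real" and p q :: real
  assumes pq: "p < q" and cont: "continuous_on {p..q} g"
    and mono: "\<And>x y. x \<in> {p..q} \<Longrightarrow> y \<in> {p..q} \<Longrightarrow> x \<le> y \<Longrightarrow> g x \<le> g y"
  shows "integral {p..q} g - g ((p+q)/2) * (q-p) \<ge> - (g ((p+q)/2) - g p) * (q-p)/2"
    and "integral {p..q} g - g ((p+q)/2) * (q-p) \<le> (g q - g ((p+q)/2)) * (q-p)/2"
proof -
  define m where "m = (p+q)/2"
  have pm: "p \<le> m" "m \<le> q" using pq by (auto simp: m_def)
  have int: "g integrable_on {p..q}" using cont integrable_continuous_real by blast
  have int1: "g integrable_on {p..m}" by (rule integrable_subinterval_real[OF int]) (use pm in auto)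
  have int2: "g integrable_on {m..q}" by (rule integrable_subinterval_real[OF int]) (use pm in auto)
  have comb: "integral {p..m} g + integral {m..q} g = integral {p..q} g"
    using Henstock_Kurzweil_Integration.integral_combine[OF pm int] .
  have a1: "integral {p..m} g \<ge> integral {p..m} (\<lambda>x. g p)"
    by (rule integral_le[OF _ int1]) (use pm in \<open>auto intro!: mono\<close>)
  have a2: "integral {p..m} g \<le> integral {p..m} (\<lambda>x. g m)"
    by (rule integral_le[OF int1]) (use pm in \<open>auto intro!: mono\<close>)
  have a3: "integral {m..q} g \<ge> integral {m..q} (\<lambda>x. g m)"
    by (rule integral_le[OF _ int2]) (use pm in \<open>auto intro!: mono\<close>)
  have a4: "integral {m..q} g \<le> integral {m..q} (\<lambda>x. g q)"
    by (rule integral_le[OF int2]) (use pm in \<open>auto intro!: mono\<close>)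
  have l1: "m - p = (q-p)/2" "q - m = (q-p)/2" by (simp_all add: m_def field_simps)
  have c1: "integral {p..m} (\<lambda>x. g p) = g p * ((q-p)/2)" 
    and c2: "integral {p..m} (\<lambda>x. g m) = g m * ((q-p)/2)"
    and c3: "integral {m..q} (\<lambda>x. g m) = g m * ((q-p)/2)"
    and c4: "integral {m..q} (\<lambda>x. g q) = g q * ((q-p)/2)"
    using pm l1 by (auto simp: mult.commute)
  show "integral {p..q} g - g ((p+q)/2) * (q-p) \<ge> - (g ((p+q)/2) - g p) * (q-p)/2"
  proof -
    have "- (g m - g p) * (q-p)/2 = g p * ((q-p)/2) - g m * ((q-p)/2)" by (simp add: field_simps)
    moreover have "g m * (q-p) = g m * ((q-p)/2) + g m * ((q-p)/2)" by (simp add: algebra_simps)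
    ultimately show ?thesis using a1 a3 comb unfolding c1 c3 m_def[symmetric] by linarith
  qed
  show "integral {p..q} g - g ((p+q)/2) * (q-p) \<le> (g q - g ((p+q)/2)) * (q-p)/2"
  proof -
    have "(g q - g m) * (q-p)/2 = g q * ((q-p)/2) - g m * ((q-p)/2)" by (simp add: field_simps)
    moreover have "g m * (q-p) = g m * ((q-p)/2) + g m * ((q-p)/2)" by (simp add: algebra_simps)
    ultimately show ?thesis using a2 a4 comb unfolding c2 c4 m_def[symmetric] by linarith
  qed
qed

lemma mono_bound:
  fixes g :: "real \<Rightarrow> real" and a b :: real
  assumes ab: "a < b" and cont: "continuous_on {a..b} g"
    and mono: "\<And>x y. x \<in> {a..b} \<Longrightarrow> y \<in> {a..b} \<Longrightarrow> x \<le> y \<Longrightarrow> g x \<le> g y"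
  shows "\<bar>(g ((3*a + b)/4) + g ((a + 3*b)/4)) / 2 - (1/(b - a)) * integral {a..b} g\<bar>
           \<le> (g b - g a) / 4"
proof -
  define c where "c = (a+b)/2"
  have ac: "a < c" "c < b" using ab by (auto simp: c_def)
  have e1: "(a+c)/2 = (3*a+b)/4" "(c+b)/2 = (a+3*b)/4" by (auto simp: c_def)
  have int: "g integrable_on {a..b}" using cont integrable_continuous_real by blast
  have comb: "integral {a..c} g + integral {c..b} g = integral {a..b} g"
    using Henstock_Kurzweil_Integration.integral_combine[OF _ _ int] ac by auto
  have cont1: "continuous_on {a..c} g" "continuous_on {c..b} g"
    using cont ac by (auto intro: continuous_on_subset)
  have mono1: "\<And>x y. x \<in> {a..c} \<Longrightarrow> y \<in> {a..c} \<Longrightarrow> x \<le> y \<Longrightarrow> g x \<le> g y"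
    and mono2: "\<And>x y. x \<in> {c..b} \<Longrightarrow> y \<in> {c..b} \<Longrightarrow> x \<le> y \<Longrightarrow> g x \<le> g y"
    using mono ac by auto
  note h1 = half_bound[OF ac(1) cont1(1) mono1, unfolded e1]
  note h2 = half_bound[OF ac(2) cont1(2) mono2, unfolded e1]
  have cl: "c - a = (b-a)/2" "b - c = (b-a)/2" by (simp_all add: c_def field_simps)
  define E where "E = (g ((3*a + b)/4) + g ((a + 3*b)/4)) * (b-a) / 2 - integral {a..b} g"
  have m1: "g a \<le> g ((3*a + b)/4)" "g ((3*a + b)/4) \<le> g c" "g c \<le> g ((a + 3*b)/4)"
      "g ((a + 3*b)/4) \<le> g b" using ab by (auto intro!: mono simp: c_def)
  have "\<bar>E\<bar> \<le> (g b - g a) * (b-a) / 4"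
  proof -
    define L where "L = (b-a)/2"
    have L: "b - a = 2*L" "c - a = L" "b - c = L" using cl by (auto simp: L_def)
    define x1 where "x1 = g ((3*a + b)/4)"
    define x2 where "x2 = g ((a + 3*b)/4)"
    have h1': "integral {a..c} g - x1 * L \<ge> - (x1 - g a) * L / 2"
              "integral {a..c} g - x1 * L \<le> (g c - x1) * L / 2"
      using h1 unfolding L x1_def by auto
    have h2': "integral {c..b} g - x2 * L \<ge> - (x2 - g c) * L / 2"
              "integral {c..b} g - x2 * L \<le> (g b - x2) * L / 2"
      using h2 unfolding L x2_def by auto
    have Lp: "L > 0" using ab by (simp add: L_def)
    have m1': "g a \<le> x1" "x1 \<le> g c" "g c \<le> x2" "x2 \<le> g b" using m1 by (auto simp: x1_def x2_def)
    have "E = x1 * L + x2 * L - integral {a..c} g - integral {c..b} g"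
      unfolding E_def L x1_def x2_def using comb by (simp add: algebra_simps)
    moreover have "(g b - g a) * (b-a) / 4 = (g b - g a) * L / 2" unfolding L by simp
    moreover have "(x1 - g a) * L \<le> (g c - g a) * L" "(x2 - g c) * L \<le> (g b - g c) * L"
       "(g c - x1) * L \<le> (g c - g a) * L" "(g b - x2) * L \<le> (g b - g c) * L"
      using m1' Lp by (auto intro!: mult_right_mono)
    moreover have "(g c - g a) * L + (g b - g c) * L = (g b - g a) * L" by (simp add: algebra_simps)
    ultimately show ?thesis using h1' h2' unfolding abs_le_iff by linarith
  qed
  moreover have "(g ((3*a + b)/4) + g ((a + 3*b)/4)) / 2 - (1/(b - a)) * integral {a..b} g = E / (b-a)"
    using ab unfolding E_def by (simp add: field_simps)
  ultimately show ?thesis using ab by (simp add: abs_divide divide_le_eq)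
qed

theorem corollary2p1:
  fixes f f' :: "real \<Rightarrow> real" and a b \<gamma> \<Gamma> S :: real
  assumes ab: "a < b"
    and cont: "continuous_on {a..b} f"
    and deriv: "\<And>x. x \<in> {a<..<b} \<Longrightarrow> (f has_real_derivative f' x) (at x)"
    and L1: "f' absolutely_integrable_on {a..b}"
    and bounds: "\<And>x. x \<in> {a..b} \<Longrightarrow> \<gamma> \<le> f' x \<and> f' x \<le> \<Gamma>"
    and S_def: "S = (f b - f a) / (b - a)"
  shows "\<bar>(f ((3*a + b)/4) + f ((a + 3*b)/4)) / 2 - (1/(b - a)) * integral {a..b} f\<bar>
           \<le> (b - a)/4 * (S - \<gamma>) \<and>
         \<bar>(f ((3*a + b)/4) + f ((a + 3*b)/4)) / 2 - (1/(b - a)) * integral {a..b} f\<bar>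
           \<le> (b - a)/4 * (\<Gamma> - S)"
proof -
  define E where "E = (f ((3*a + b)/4) + f ((a + 3*b)/4)) / 2 - (1/(b - a)) * integral {a..b} f"
  have intf: "f integrable_on {a..b}" using cont integrable_continuous_real by blast
  have intx: "(\<lambda>x. x) integrable_on {a..b}" using integrable_continuous_real continuous_on_id by blast
  have ix: "integral {a..b} (\<lambda>x. x) = (b^2 - a^2)/2" using ab by simp
  have key: "\<And>x y h. x \<in> {a..b} \<Longrightarrow> y \<in> {a..b} \<Longrightarrow> x \<le> y \<Longrightarrow> continuous_on {a..b} h
      \<Longrightarrow> (\<And>t. t \<in> {a<..<b} \<Longrightarrow> \<exists>d. (h has_real_derivative d) (at t) \<and> d \<ge> 0) \<Longrightarrow> h x \<le> h y"
  proof -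
    fix x y and h :: "real \<Rightarrow> real"
    assume xy: "x \<in> {a..b}" "y \<in> {a..b}" "x \<le> y" and hc: "continuous_on {a..b} h"
      and hd: "\<And>t. t \<in> {a<..<b} \<Longrightarrow> \<exists>d. (h has_real_derivative d) (at t) \<and> d \<ge> 0"
    show "h x \<le> h y"
    proof (rule DERIV_nonneg_imp_increasing_open[OF xy(3)])
      show "continuous_on {x..y} h" using hc xy by (auto intro: continuous_on_subset)
      fix t assume "x < t" "t < y" then show "\<exists>d. (h has_real_derivative d) (at t) \<and> d \<ge> 0"
        using hd xy by auto
    qed
  qed
  define g1 where "g1 = (\<lambda>x. f x - \<gamma> * x)"
  have c1: "continuous_on {a..b} g1" unfolding g1_def by (intro continuous_intros cont)
  have m1: "\<And>x y. x \<in> {a..b} \<Longrightarrow> y \<in> {a..b} \<Longrightarrow> x \<le> y \<Longrightarrow> g1 x \<le> g1 y"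
  proof -
    fix x y assume "x \<in> {a..b}" "y \<in> {a..b}" "x \<le> y"
    then show "g1 x \<le> g1 y"
    proof (rule key[OF _ _ _ c1])
      fix t assume t: "t \<in> {a<..<b}"
      have "(g1 has_real_derivative (f' t - \<gamma>)) (at t)" unfolding g1_def
        using deriv[OF t] by (auto intro!: derivative_eq_intros)
      moreover have "f' t - \<gamma> \<ge> 0" using bounds[of t] t by auto
      ultimately show "\<exists>d. (g1 has_real_derivative d) (at t) \<and> d \<ge> 0" by blast
    qed
  qed
  have i1: "integral {a..b} g1 = integral {a..b} f - \<gamma> * ((b^2 - a^2)/2)"
  proof -
    have ig: "(\<lambda>x. \<gamma> * x) integrable_on {a..b}" by (intro integrable_continuous_real continuous_intros)
    then have "integral {a..b} g1 = integral {a..b} f - integral {a..b} (\<lambda>x. \<gamma> * x)"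
      using integral_diff[OF intf ig] unfolding g1_def by simp
    also have "integral {a..b} (\<lambda>x. \<gamma> * x) = \<gamma> * integral {a..b} (\<lambda>x. x)" by simp
    finally show ?thesis using ix by simp
  qed
  have E1: "(g1 ((3*a + b)/4) + g1 ((a + 3*b)/4)) / 2 - (1/(b - a)) * integral {a..b} g1 = E"
  proof -
    have h: "(b^2 - a^2)/2 / (b-a) = (a+b)/2" using ab by (simp add: power2_eq_square field_simps)
    have "(1/(b - a)) * integral {a..b} g1 = (1/(b - a)) * integral {a..b} f - \<gamma> * ((a+b)/2)"
    proof -
      have "1/(b-a) * (\<gamma> * ((b^2 - a^2)/2)) = \<gamma> * ((b^2 - a^2)/2 / (b-a))" by simp
      then show ?thesis unfolding i1 right_diff_distrib h by simp
    qed
    moreover have v: "g1 ((3*a+b)/4) + g1 ((a+3*b)/4) = f ((3*a+b)/4) + f ((a+3*b)/4) - \<gamma>*(a+b)"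
      unfolding g1_def by (simp add: field_simps)
    ultimately show ?thesis unfolding E_def v by (simp add: field_simps)
  qed
  have G1: "(g1 b - g1 a) / 4 = (b - a)/4 * (S - \<gamma>)"
    using ab by (simp add: g1_def S_def field_simps)
  define g2 where "g2 = (\<lambda>x. \<Gamma> * x - f x)"
  have c2: "continuous_on {a..b} g2" unfolding g2_def by (intro continuous_intros cont)
  have m2: "\<And>x y. x \<in> {a..b} \<Longrightarrow> y \<in> {a..b} \<Longrightarrow> x \<le> y \<Longrightarrow> g2 x \<le> g2 y"
  proof -
    fix x y assume "x \<in> {a..b}" "y \<in> {a..b}" "x \<le> y"
    then show "g2 x \<le> g2 y"
    proof (rule key[OF _ _ _ c2])
      fix t assume t: "t \<in> {a<..<b}"
      have "(g2 has_real_derivative (\<Gamma> - f' t)) (at t)" unfolding g2_def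
        using deriv[OF t] by (auto intro!: derivative_eq_intros)
      moreover have "\<Gamma> - f' t \<ge> 0" using bounds[of t] t by auto
      ultimately show "\<exists>d. (g2 has_real_derivative d) (at t) \<and> d \<ge> 0" by blast
    qed
  qed
  have i2: "integral {a..b} g2 = \<Gamma> * ((b^2 - a^2)/2) - integral {a..b} f"
  proof -
    have ig: "(\<lambda>x. \<Gamma> * x) integrable_on {a..b}" by (intro integrable_continuous_real continuous_intros)
    then have "integral {a..b} g2 = integral {a..b} (\<lambda>x. \<Gamma> * x) - integral {a..b} f"
      using integral_diff[OF ig intf] unfolding g2_def by simp
    also have "integral {a..b} (\<lambda>x. \<Gamma> * x) = \<Gamma> * integral {a..b} (\<lambda>x. x)" by simp
    finally show ?thesis using ix by simp
  qed
  have E2: "(g2 ((3*a + b)/4) + g2 ((a + 3*b)/4)) / 2 - (1/(b - a)) * integral {a..b} g2 = - E"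
  proof -
    have h: "(b^2 - a^2)/2 / (b-a) = (a+b)/2" using ab by (simp add: power2_eq_square field_simps)
    have "(1/(b - a)) * integral {a..b} g2 = \<Gamma> * ((a+b)/2) - (1/(b - a)) * integral {a..b} f"
    proof -
      have "1/(b-a) * (\<Gamma> * ((b^2 - a^2)/2)) = \<Gamma> * ((b^2 - a^2)/2 / (b-a))" by simp
      then show ?thesis unfolding i2 right_diff_distrib h by simp
    qed
    moreover have v: "g2 ((3*a+b)/4) + g2 ((a+3*b)/4) = \<Gamma>*(a+b) - (f ((3*a+b)/4) + f ((a+3*b)/4))"
      unfolding g2_def by (simp add: field_simps)
    ultimately show ?thesis unfolding E_def v by (simp add: field_simps)
  qed
  have G2: "(g2 b - g2 a) / 4 = (b - a)/4 * (\<Gamma> - S)"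
    using ab by (simp add: g2_def S_def field_simps)
  have r1: "\<bar>E\<bar> \<le> (b - a)/4 * (S - \<gamma>)" using mono_bound[OF ab c1 m1] E1 G1 by simp
  have r2: "\<bar>E\<bar> \<le> (b - a)/4 * (\<Gamma> - S)" using mono_bound[OF ab c2 m2] E2 G2 by simp
  show ?thesis using r1 r2 unfolding E_def by simp
qed

end
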